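(* Assume the quadratic vector equation $Mx=a+b(x,x)$ has at least one solution, and let $x_\ast$ be its minimal solution. Then for each $i\in\{1,\dots,n\}$, $(x_\ast)_i>0$ if and only if there exists a positivity-showing sequence for $i$.
   Context: Inequalities between vectors are componentwise. An M-matrix is a matrix $sI-P$ with $P\geq0$ entrywise and $s\geq\rho(P)$ ($\rho$ = spectral radius). Let $M\in\mathbb R^{n\times n}$ be a nonsingular M-matrix, $a\in\mathbb R^n$ with $a\geq 0$, and $b:\mathbb R^n\times\mathbb R^n\to\mathbb R^n$ a bilinear map (not necessarily symmetric) with $b(x,y)\geq 0$ whenever $x,y\geq 0$. A solution means a vector $x\geq0$ with $Mx=a+b(x,x)$; a solution $x_\ast$ is minimal if $x_\ast\leq y$ for every solution $y$. Let $(M^{-1}B)_{rst}$ denote the tensor of the bilinear map $(x,y)\mapsto M^{-1}b(x,y)$, i.e. $(M^{-1}b(x,y))_t=\sum_{r,s}(M^{-1}B)_{rst}x_r y_s$. A finite sequence $S_1,\dots,S_N$ of subsets of $\{1,\dots,n\}$ is positivity-showing for $i$ if: (i) $S_1=\{h:(M^{-1}a)_h>0\}$; (ii) $S_h\subseteq S_{h+1}$ for each $h$; (iii) for each $h$ and each $t\in S_{h+1}\setminus S_h$ there exist $r,s\in S_h$ (possibly $r=s$) with $(M^{-1}B)_{rst}>0$; (iv) $i\in S_N$. *)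

theory Defs
  imports "HOL-Analysis.Analysis"
begin

definition cmat :: "real^'n^'n \<Rightarrow> complex^'n^'n" where
  "cmat A = (\<chi> i j. complex_of_real (A$i$j))"

definition spec_rad :: "real^'n^'n \<Rightarrow> real" where
  "spec_rad A = Sup {cmod l | l. \<exists>v::complex^'n. v \<noteq> 0 \<and> cmat A *v v = l *s v}"

definition is_M_matrix :: "real^'n^'n \<Rightarrow> bool" where
  "is_M_matrix M \<longleftrightarrow> (\<exists>s P. (\<forall>i j. 0 \<le> P$i$j) \<and> spec_rad P \<le> s
       \<and> M = s *\<^sub>R mat 1 - P)"

definition nonsingular_M_matrix :: "real^'n^'n \<Rightarrow> bool" where
  "nonsingular_M_matrix M \<longleftrightarrow> is_M_matrix M \<and> invertible M"

definition is_solution ::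
  "real^'n^'n \<Rightarrow> real^'n \<Rightarrow> (real^'n \<Rightarrow> real^'n \<Rightarrow> real^'n) \<Rightarrow> real^'n \<Rightarrow> bool" where
  "is_solution M a b x \<longleftrightarrow> (\<forall>i. 0 \<le> x$i) \<and> M *v x = a + b x x"

definition is_minimal_solution ::
  "real^'n^'n \<Rightarrow> real^'n \<Rightarrow> (real^'n \<Rightarrow> real^'n \<Rightarrow> real^'n) \<Rightarrow> real^'n \<Rightarrow> bool" where
  "is_minimal_solution M a b x \<longleftrightarrow> is_solution M a b x \<and>
     (\<forall>y. is_solution M a b y \<longrightarrow> (\<forall>i. x$i \<le> y$i))"

definition MinvB ::
  "real^'n^'n \<Rightarrow> (real^'n \<Rightarrow> real^'n \<Rightarrow> real^'n) \<Rightarrow> 'n \<Rightarrow> 'n \<Rightarrow> 'n \<Rightarrow> real" where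
  "MinvB M b r s t = (matrix_inv M *v b (axis r 1) (axis s 1)) $ t"

text \<open>Positivity-showing sequence S_1,...,S_N, represented as a nonempty list
  (0-based: S!0 = S_1, last S = S_N).\<close>
definition positivity_showing ::
  "real^'n^'n \<Rightarrow> real^'n \<Rightarrow> (real^'n \<Rightarrow> real^'n \<Rightarrow> real^'n) \<Rightarrow> 'n \<Rightarrow> 'n set list \<Rightarrow> bool" where
  "positivity_showing M a b i S \<longleftrightarrow>
     S \<noteq> [] \<and>
     S ! 0 = {h. (matrix_inv M *v a) $ h > 0} \<and>
     (\<forall>h. Suc h < length S \<longrightarrow> S ! h \<subseteq> S ! Suc h) \<and>
     (\<forall>h. Suc h < length S \<longrightarrow> (\<forall>t \<in> S ! Suc h - S ! h.
         \<exists>r \<in> S ! h. \<exists>s \<in> S ! h. MinvB M b r s t > 0)) \<and>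
     i \<in> last S"

end

theory Submission
  imports Defs
begin

definition Qp :: "real^'n^'n \<Rightarrow> real \<Rightarrow> bool" where
 "Qp P t \<longleftrightarrow> (\<forall>y. (\<forall>i. 0 \<le> ((t *\<^sub>R mat 1 - P) *v y)$i) \<longrightarrow> (\<forall>i. 0 \<le> y$i))"

lemma ex_argmin: fixes f :: "'n::finite \<Rightarrow> real" shows "\<exists>i. \<forall>j. f i \<le> f j"
proof -
  have "Min (range f) \<in> range f" by (intro Min_in) auto
  then obtain i where "Min (range f) = f i" by (auto simp: image_iff)
  moreover have "\<forall>j. Min (range f) \<le> f j" by (intro allI Min_le) auto
  ultimately show ?thesis by metis
qed

lemma ex_argmax: fixes f :: "'n::finite \<Rightarrow> real" shows "\<exists>i. \<forall>j. f j \<le> f i"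
  using ex_argmin[of "\<lambda>j. - f j"] by auto

lemma Acomp: "((t *\<^sub>R mat 1 - P) *v y) $ i = t * y$i - (\<Sum>j\<in>UNIV. P$i$j * y$j)"
  by (simp add: matrix_vector_mult_diff_rdistrib scaleR_matrix_vector_assoc[symmetric]) (simp add: matrix_vector_mult_def)

lemma Qp_det: assumes "Qp P t" shows "det (t *\<^sub>R mat 1 - P) \<noteq> 0"
proof -
  let ?A = "t *\<^sub>R mat 1 - P"
  have "inj ((*v) ?A)"
  proof (rule linear_injective_0[OF matrix_vector_mul_linear, THEN iffD2])
    show "\<forall>x. ?A *v x = 0 \<longrightarrow> x = 0"
    proof (intro allI impI)
      fix x assume x: "?A *v x = 0"
      have "\<forall>i. 0 \<le> x$i" using assms x unfolding Qp_def by auto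
      moreover have "?A *v (-x) = 0" using x by (metis matrix_vector_mult_diff_distrib diff_0 diff_self)
      then have "\<forall>i. 0 \<le> (-x)$i" using assms unfolding Qp_def by (metis order_refl zero_index)
      ultimately show "x = 0" by (simp add: vec_eq_iff) (meson antisym neg_0_le_iff_le)
    qed
  qed
  then show ?thesis using det_nz_iff_inj[OF matrix_vector_mul_linear, of ?A] by simp
qed

lemma Qp_big: fixes P :: "real^'n^'n" assumes P: "\<forall>i j. 0 \<le> P$i$j" and t: "t > (\<Sum>i\<in>UNIV. \<Sum>j\<in>UNIV. P$i$j)"
  shows "Qp P t"
  unfolding Qp_def
proof (rule allI, rule impI)
  fix y :: "real^'n" assume h: "\<forall>i. 0 \<le> ((t *\<^sub>R mat 1 - P) *v y)$i"
  obtain i0 where i0: "\<forall>j. y$i0 \<le> y$j" using ex_argmin[of "\<lambda>j. y$j"] by blast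
  show "\<forall>i. 0 \<le> y$i"
  proof (rule ccontr)
    assume "\<not> (\<forall>i. 0 \<le> y$i)"
    then have neg: "y$i0 < 0" using i0 by (meson le_less_trans not_le)
    have "0 \<le> t * y$i0 - (\<Sum>j\<in>UNIV. P$i0$j * y$j)" using h[rule_format, of i0] by (simp add: Acomp)
    moreover have "(\<Sum>j\<in>UNIV. P$i0$j * y$i0) \<le> (\<Sum>j\<in>UNIV. P$i0$j * y$j)"
      by (intro sum_mono) (simp add: P i0 mult_left_mono)
    moreover have "(\<Sum>j\<in>UNIV. P$i0$j) \<le> (\<Sum>i\<in>UNIV. \<Sum>j\<in>UNIV. P$i$j)"
      by (rule member_le_sum) (auto simp: P sum_nonneg)
    moreover have "(\<Sum>j\<in>UNIV. P$i0$j * y$i0) = (\<Sum>j\<in>UNIV. P$i0$j) * y$i0" by (simp add: sum_distrib_right)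
    ultimately have "0 \<le> (t - (\<Sum>j\<in>UNIV. P$i0$j)) * y$i0" by (simp add: algebra_simps)
    moreover have "t - (\<Sum>j\<in>UNIV. P$i0$j) > 0" using t \<open>(\<Sum>j\<in>UNIV. P$i0$j) \<le> _\<close> by linarith
    ultimately show False using neg by (meson leD mult_pos_neg)
  qed
qed

lemma Qp_down: fixes P :: "real^'n^'n" assumes Q: "Qp P t"
  shows "\<exists>\<delta>>0. \<forall>t'. t - \<delta> \<le> t' \<and> t' \<le> t \<longrightarrow> Qp P t'"
proof -
  let ?A = "t *\<^sub>R mat 1 - P"
  have d0: "det ?A \<noteq> 0" using Qp_det[OF Q] .
  obtain u where u: "?A *v u = 1" using cramer[OF d0, of _ 1] by blast
  have u0: "\<forall>i. 0 \<le> u$i" using Q u unfolding Qp_def by simp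
  define K where "K = (\<Sum>i\<in>UNIV. u$i)"
  have K0: "0 \<le> K" unfolding K_def using u0 by (simp add: sum_nonneg)
  have uK: "u$i \<le> K" for i unfolding K_def by (rule member_le_sum) (auto simp: u0)
  define \<delta> where "\<delta> = 1 / (K+1)"
  have dpos: "\<delta> > 0" using K0 by (simp add: \<delta>_def)
  have dK: "\<delta> * K < 1" using K0 by (simp add: \<delta>_def field_simps)
  show ?thesis
  proof (intro exI[of _ \<delta>] conjI allI impI dpos)
    fix t' assume t': "t - \<delta> \<le> t' \<and> t' \<le> t"
    define d where "d = t - t'"
    have d: "0 \<le> d" "d \<le> \<delta>" using t' by (auto simp: d_def)
    show "Qp P t'" unfolding Qp_def
    proof (rule allI, rule impI)
      fix y :: "real^'n" assume h: "\<forall>i. 0 \<le> ((t' *\<^sub>R mat 1 - P) *v y)$i"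
      show "\<forall>i. 0 \<le> y$i"
      proof (rule ccontr)
        assume "\<not> (\<forall>i. 0 \<le> y$i)"
        then obtain i1 where i1: "y$i1 < 0" by (auto simp: not_le)
        obtain i0 where i0: "\<forall>j. - y$j \<le> - y$i0" using ex_argmax[of "\<lambda>j. - y$j"] by blast
        define m where "m = - y$i0"
        have mpos: "m > 0" using i0[rule_format, of i1] i1 unfolding m_def by linarith
        have "\<forall>i. 0 \<le> (?A *v (y + (d*m) *\<^sub>R u))$i"
        proof
          fix i
          have "(?A *v (y + (d*m) *\<^sub>R u))$i = (?A *v y)$i + d*m"
            using u by (simp add: matrix_vector_right_distrib matrix_vector_mult_scaleR)
          also have "(?A *v y)$i = ((t' *\<^sub>R mat 1 - P) *v y)$i + d * y$i"
            unfolding Acomp d_def by (simp add: algebra_simps)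
          finally have "(?A *v (y + (d*m) *\<^sub>R u))$i = ((t' *\<^sub>R mat 1 - P) *v y)$i + d * (y$i + m)"
            by (simp add: algebra_simps)
          moreover have "0 \<le> y$i + m" using i0[rule_format, of i] unfolding m_def by linarith
          ultimately show "0 \<le> (?A *v (y + (d*m) *\<^sub>R u))$i" using h d by simp
        qed
        then have "0 \<le> (y + (d*m) *\<^sub>R u)$i0" using Q unfolding Qp_def by blast
        then have "m \<le> d*m*u$i0" unfolding m_def by simp
        also have "\<dots> \<le> d*m*K" using uK d mpos by (simp add: mult_left_mono)
        also have "\<dots> \<le> \<delta>*m*K" using d mpos K0 by (simp add: mult_right_mono)
        also have "\<dots> < m" using dK mpos by (simp add: mult.commute mult.left_commute)
        finally show False by simp
      qed
    qed
  qed
qed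

lemma tendsto_det:
  fixes f :: "'a \<Rightarrow> real^'n^'n"
  assumes "\<And>i j. ((\<lambda>t. f t $i$j) \<longlongrightarrow> g$i$j) F"
  shows "((\<lambda>t. det (f t)) \<longlongrightarrow> det g) F"
  unfolding det_def by (intro tendsto_intros assms)

lemma Qp_closed: fixes P :: "real^'n^'n"
  assumes d0: "det (t0 *\<^sub>R mat 1 - P) \<noteq> 0" and e: "\<epsilon> > 0"
    and Q: "\<forall>t'. t0 < t' \<and> t' < t0 + \<epsilon> \<longrightarrow> Qp P t'"
  shows "Qp P t0"
  unfolding Qp_def
proof (rule allI, rule impI)
  fix y :: "real^'n"
  let ?z = "(t0 *\<^sub>R mat 1 - P) *v y"
  assume h: "\<forall>i. 0 \<le> ?z$i"
  define C where "C t k = (\<chi> i j. if j=k then ?z$i else (t *\<^sub>R mat 1 - P)$i$j)" for t k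
  define X where "X t = (\<chi> k. det (C t k) / det (t *\<^sub>R mat 1 - P))" for t
  have y: "y = X t0" using cramer[OF d0, of y ?z] unfolding X_def C_def by simp
  have ev: "eventually (\<lambda>t. 0 \<le> X t $ k) (at_right t0)" for k
    unfolding eventually_at_right_field
  proof (intro exI[of _ "t0+\<epsilon>"] conjI allI impI)
    show "t0 < t0 + \<epsilon>" using e by simp
    fix t assume t: "t0 < t" "t < t0 + \<epsilon>"
    then have Qt: "Qp P t" using Q by blast
    have "(t *\<^sub>R mat 1 - P) *v X t = ?z"
      using cramer[OF Qp_det[OF Qt], of "X t" ?z] unfolding X_def C_def by simp
    then show "0 \<le> X t $ k" using Qt h unfolding Qp_def by metis
  qed
  have lim: "((\<lambda>t. X t $ k) \<longlongrightarrow> X t0 $ k) (at_right t0)" for k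
  proof -
    have ent0: "((\<lambda>t. t * mat 1 $ i $ j - P $ i $ j) \<longlongrightarrow> t0 * mat 1$i$j - P$i$j) (at_right t0)" for i j
      by (intro tendsto_intros)
    have ent: "((\<lambda>t. (t *\<^sub>R mat 1 - P)$i$j) \<longlongrightarrow> (t0 *\<^sub>R mat 1 - P)$i$j) (at_right t0)" for i j
      using ent0 by simp
    have "((\<lambda>t. det (C t k)) \<longlongrightarrow> det (C t0 k)) (at_right t0)"
      by (rule tendsto_det) (auto simp: C_def ent0)
    moreover have "((\<lambda>t. det (t *\<^sub>R mat 1 - P)) \<longlongrightarrow> det (t0 *\<^sub>R mat 1 - P)) (at_right t0)"
      by (rule tendsto_det) (rule ent)
    ultimately show ?thesis unfolding X_def using d0 by (simp add: tendsto_divide)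
  qed
  show "\<forall>i. 0 \<le> y$i"
  proof
    fix k
    show "0 \<le> y$k" unfolding y
      by (rule tendsto_lowerbound[OF lim ev]) simp
  qed
qed

lemma eig_bound:
  fixes P :: "real^'n^'n" and v :: "complex^'n"
  assumes v: "v \<noteq> 0" and ev: "cmat P *v v = l *s v"
  shows "cmod l \<le> (\<Sum>i\<in>UNIV. \<Sum>j\<in>UNIV. \<bar>P$i$j\<bar>)"
proof -
  obtain i0 where i0: "\<forall>j. cmod (v$j) \<le> cmod (v$i0)" using ex_argmax[of "\<lambda>j. cmod (v$j)"] by blast
  have pos: "cmod (v$i0) > 0"
  proof (rule ccontr)
    assume "\<not> cmod (v$i0) > 0"
    then have "\<forall>j. v$j = 0" using i0 by (metis norm_le_zero_iff not_less order_trans)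
    then show False using v by (simp add: vec_eq_iff)
  qed
  have "l * v$i0 = (\<Sum>j\<in>UNIV. complex_of_real (P$i0$j) * v$j)"
    using arg_cong[OF ev, of "\<lambda>w. w$i0"] by (simp add: matrix_vector_mult_def cmat_def)
  then have "cmod l * cmod (v$i0) = cmod (\<Sum>j\<in>UNIV. complex_of_real (P$i0$j) * v$j)"
    by (metis norm_mult)
  also have "\<dots> \<le> (\<Sum>j\<in>UNIV. \<bar>P$i0$j\<bar> * cmod (v$j))"
    by (rule order_trans[OF norm_sum]) (simp add: norm_mult)
  also have "\<dots> \<le> (\<Sum>j\<in>UNIV. \<bar>P$i0$j\<bar> * cmod (v$i0))"
    by (intro sum_mono mult_left_mono) (auto simp: i0)
  also have "\<dots> = (\<Sum>j\<in>UNIV. \<bar>P$i0$j\<bar>) * cmod (v$i0)" by (simp add: sum_distrib_right)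
  also have "\<dots> \<le> (\<Sum>i\<in>UNIV. \<Sum>j\<in>UNIV. \<bar>P$i$j\<bar>) * cmod (v$i0)"
    by (intro mult_right_mono member_le_sum) (auto simp: sum_nonneg)
  finally show ?thesis using pos by simp
qed

lemma eig_det:
  fixes P :: "real^'n^'n"
  assumes sp: "spec_rad P \<le> s" and st: "s < t"
  shows "det (t *\<^sub>R mat 1 - P) \<noteq> 0"
proof
  let ?A = "t *\<^sub>R mat 1 - P"
  let ?S = "{cmod l | l. \<exists>v::complex^'n. v \<noteq> 0 \<and> cmat P *v v = l *s v}"
  assume "det ?A = 0"
  then have "\<not> inj ((*v) ?A)" using det_nz_iff_inj[OF matrix_vector_mul_linear, of ?A] by simp
  then obtain v where v: "?A *v v = 0" "v \<noteq> 0"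
    using linear_injective_0[OF matrix_vector_mul_linear, of ?A] by blast
  define cv where "cv = (\<chi> i. complex_of_real (v$i))"
  have cv0: "cv \<noteq> 0" using v(2) by (simp add: cv_def vec_eq_iff)
  have comp: "t * v$i = (\<Sum>j\<in>UNIV. P$i$j * v$j)" for i
    using arg_cong[OF v(1), of "\<lambda>w. w$i"] by (simp add: Acomp)
  have "cmat P *v cv = complex_of_real t *s cv"
  proof (subst vec_eq_iff, rule allI)
    fix i
    have "(cmat P *v cv)$i = complex_of_real (\<Sum>j\<in>UNIV. P$i$j * v$j)"
      by (simp add: matrix_vector_mult_def cmat_def cv_def)
    also have "\<dots> = complex_of_real t * cv$i" by (simp add: comp[symmetric] cv_def)
    finally show "(cmat P *v cv)$i = (complex_of_real t *s cv)$i" by simp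
  qed
  then have mem: "cmod (complex_of_real t) \<in> ?S" using cv0 by blast
  have bdd: "bdd_above ?S"
    by (rule bdd_aboveI[of _ "\<Sum>i\<in>UNIV. \<Sum>j\<in>UNIV. \<bar>P$i$j\<bar>"]) (auto intro: eig_bound)
  have "cmod (complex_of_real t) \<le> spec_rad P"
    unfolding spec_rad_def by (rule cSup_upper[OF mem bdd])
  then show False using sp st by simp
qed

lemma Qp_s:
  fixes P :: "real^'n^'n"
  assumes P: "\<forall>i j. 0 \<le> P$i$j" and sp: "spec_rad P \<le> s" and d: "det (s *\<^sub>R mat 1 - P) \<noteq> 0"
  shows "Qp P s"
proof -
  define T1 where "T1 = max s ((\<Sum>i\<in>UNIV. \<Sum>j\<in>UNIV. P$i$j) + 1)"
  define B where "B = {t. s \<le> t \<and> (\<forall>t'. t \<le> t' \<longrightarrow> Qp P t')}"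
  have T1B: "T1 \<in> B" unfolding B_def T1_def
    by (auto intro!: Qp_big[OF P])
  have bdd: "bdd_below B" unfolding B_def by (rule bdd_belowI[of _ s]) auto
  define ts where "ts = Inf B"
  have sts: "s \<le> ts" unfolding ts_def using T1B by (intro cInf_greatest) (auto simp: B_def)
  have above: "Qp P t'" if h: "ts < t'" for t'
  proof -
    have "B \<noteq> {}" using T1B by blast
    then obtain b where "b \<in> B" "b < t'" using cInf_lessD[of B t'] h unfolding ts_def by blast
    then show ?thesis unfolding B_def by auto
  qed
  have dts: "det (ts *\<^sub>R mat 1 - P) \<noteq> 0"
  proof (cases "ts = s")
    case True then show ?thesis using d by simp
  next
    case False then show ?thesis using eig_det[OF sp] sts by simp
  qed
  have Qts: "Qp P ts" by (rule Qp_closed[OF dts, of 1]) (auto intro: above)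
  have "ts = s"
  proof (rule ccontr)
    assume ne: "ts \<noteq> s"
    obtain \<delta> where dl: "\<delta> > 0" "\<forall>t'. ts - \<delta> \<le> t' \<and> t' \<le> ts \<longrightarrow> Qp P t'"
      using Qp_down[OF Qts] by blast
    define t2 where "t2 = max s (ts - \<delta>)"
    have "t2 \<in> B" unfolding B_def
    proof (intro CollectI conjI allI impI)
      show "s \<le> t2" by (simp add: t2_def)
      fix t' assume "t2 \<le> t'"
      then show "Qp P t'" using dl above unfolding t2_def by (cases "t' \<le> ts") auto
    qed
    then have "ts \<le> t2" unfolding ts_def by (rule cInf_lower[OF _ bdd])
    moreover have "t2 < ts" using ne sts dl(1) by (simp add: t2_def)
    ultimately show False by simp
  qed
  then show ?thesis using Qts by simp
qed

lemma bil_expand: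
  fixes b :: "real^'n \<Rightarrow> real^'n \<Rightarrow> real^'n" and N :: "real^'n^'n"
  assumes bl: "bilinear b"
  shows "(N *v b x y)$t = (\<Sum>(r,s)\<in>UNIV\<times>UNIV. x$r * y$s * (N *v b (axis r 1) (axis s 1))$t)"
proof -
  have "b x y = b (\<Sum>r\<in>UNIV. x$r *\<^sub>R axis r 1) (\<Sum>s\<in>UNIV. y$s *\<^sub>R axis s 1)"
    using basis_expansion[of x] basis_expansion[of y] by (simp add: scalar_mult_eq_scaleR)
  also have "\<dots> = (\<Sum>(r,s)\<in>UNIV\<times>UNIV. b (x$r *\<^sub>R axis r 1) (y$s *\<^sub>R axis s 1))"
    by (rule bilinear_sum[OF bl])
  also have "\<dots> = (\<Sum>(r,s)\<in>UNIV\<times>UNIV. (x$r * y$s) *\<^sub>R b (axis r 1) (axis s 1))"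
    by (intro sum.cong) (auto simp: bilinear_lmul[OF bl] bilinear_rmul[OF bl])
  finally have "N *v b x y = (\<Sum>(r,s)\<in>UNIV\<times>UNIV. (x$r * y$s) *\<^sub>R (N *v b (axis r 1) (axis s 1)))"
    by (simp add: linear_sum[OF matrix_vector_mul_linear] case_prod_unfold o_def matrix_vector_mult_scaleR)
  then show ?thesis by (simp add: case_prod_unfold)
qed

lemma core:
  fixes M N :: "real^'n^'n" and a :: "real^'n" and b :: "real^'n \<Rightarrow> real^'n \<Rightarrow> real^'n"
    and xs :: "real^'n"
  assumes MN: "\<And>v. M *v (N *v v) = v" and NM: "\<And>v. N *v (M *v v) = v"
    and Nn: "\<And>v. (\<forall>i. 0 \<le> v$i) \<Longrightarrow> (\<forall>i. 0 \<le> (N *v v)$i)"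
    and Ndef: "N = matrix_inv M"
    and a0: "\<forall>i. 0 \<le> a$i"
    and bl: "bilinear b"
    and bnn: "\<forall>x y. (\<forall>i. 0 \<le> x$i) \<longrightarrow> (\<forall>i. 0 \<le> y$i) \<longrightarrow> (\<forall>i. 0 \<le> b x y $ i)"
    and mins: "is_minimal_solution M a b xs"
  shows "xs$i > 0 \<longleftrightarrow> (\<exists>S. positivity_showing M a b i S)"
proof -
  define T where "T r s t = (N *v b (axis r 1) (axis s 1))$t" for r s t
  define c where "c = N *v a"
  define F where "F x = N *v (a + b x x)" for x
  have T0: "0 \<le> T r s t" for r s t
  proof -
    have "\<forall>i. 0 \<le> b (axis r 1) (axis s 1) $ i" using bnn by (simp add: axis_def)
    then show ?thesis unfolding T_def using Nn by blast
  qed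
  have c0: "0 \<le> c$t" for t unfolding c_def using Nn a0 by blast
  have Fc: "(F x)$t = c$t + (\<Sum>(r,s)\<in>UNIV\<times>UNIV. x$r * x$s * T r s t)" for x t
  proof -
    have "(F x)$t = c$t + (N *v b x x)$t" by (simp add: F_def c_def matrix_vector_right_distrib)
    also note bil_expand[OF bl, of N x x t]
    finally show ?thesis unfolding T_def .
  qed
  have sol: "is_solution M a b y \<longleftrightarrow> (\<forall>i. 0 \<le> y$i) \<and> F y = y" for y
  proof -
    have "M *v y = a + b y y \<longleftrightarrow> y = N *v (a + b y y)"
    proof
      assume "M *v y = a + b y y" then show "y = N *v (a + b y y)" using NM[of y] by simp
    next
      assume "y = N *v (a + b y y)" then show "M *v y = a + b y y" using MN[of "a + b y y"] by simp
    qed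
    then show ?thesis unfolding is_solution_def F_def by auto
  qed
  have termnn: "0 \<le> x$r * x$s * T r s t" if "\<forall>i. 0 \<le> x$i" for x r s t
    using that T0 by simp
  have Fpos: "0 \<le> (F u)$t" if "\<forall>i. 0 \<le> u$i" for u t
    unfolding Fc using c0 termnn[OF that] by (intro add_nonneg_nonneg sum_nonneg) (auto simp: case_prod_unfold)
  have Fmono: "(F u)$t \<le> (F v)$t" if u0: "\<forall>i. 0 \<le> u$i" and uv: "\<forall>i. u$i \<le> v$i" for u v t
    unfolding Fc
  proof (intro add_left_mono sum_mono, clarsimp)
    fix r s
    have "u$r * u$s \<le> v$r * v$s" using u0 uv by (meson mult_mono order_trans)
    then show "u$r * u$s * T r s t \<le> v$r * v$s * T r s t" using T0 by (rule mult_right_mono)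
  qed
  have xs_sol: "is_solution M a b xs" and xs_min: "\<And>y. is_solution M a b y \<Longrightarrow> xs$j \<le> y$j" for j
    using mins unfolding is_minimal_solution_def by auto
  have xs0: "\<forall>j. 0 \<le> xs$j" and Fxs: "F xs = xs" using xs_sol sol by auto
  have super: "\<exists>z. is_solution M a b z \<and> (\<forall>j. z$j \<le> y$j)"
    if y0: "\<forall>j. 0 \<le> y$j" and Fy: "\<forall>j. (F y)$j \<le> y$j" for y
  proof -
    define x where "x k = (F ^^ k) 0" for k
    have xS: "x (Suc k) = F (x k)" for k by (simp add: x_def)
    have bnd: "(\<forall>j. 0 \<le> x k $ j) \<and> (\<forall>j. x k $ j \<le> y$j)" for k
    proof (induction k)
      case 0 then show ?case using y0 by (simp add: x_def)
    next
      case (Suc k)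
      have 1: "\<forall>j. 0 \<le> F (x k) $ j" using Suc Fpos by blast
      have "\<forall>j. F (x k) $ j \<le> y$j"
      proof
        fix j have "F (x k) $ j \<le> F y $ j" using Suc by (intro Fmono) auto
        then show "F (x k) $ j \<le> y$j" using Fy[rule_format, of j] by linarith
      qed
      then show ?case unfolding xS using 1 by blast
    qed
    have inc: "x k $ j \<le> x (Suc k) $ j" for k j
    proof (induction k arbitrary: j)
      case 0 then show ?case using Fpos[of 0] by (simp add: x_def)
    next
      case (Suc k)
      have "F (x k) $ j \<le> F (x (Suc k)) $ j" using Suc bnd[of k] by (intro Fmono) auto
      then show ?case unfolding xS[of "Suc k"] unfolding xS .
    qed
    define z where "z = (\<chi> j. SUP k. x k $ j)"
    have lim: "(\<lambda>k. x k $ j) \<longlonglongrightarrow> z$j" for j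
      unfolding z_def vec_lambda_beta
      by (rule LIMSEQ_incseq_SUP) (auto intro!: incseq_SucI inc bdd_aboveI[of _ "y$j"] simp: bnd)
    have z0: "0 \<le> z$j" for j
      by (rule tendsto_lowerbound[OF lim]) (auto simp: bnd)
    have zy: "z$j \<le> y$j" for j
      by (rule tendsto_upperbound[OF lim]) (auto simp: bnd)
    have "F z = z"
    proof (subst vec_eq_iff, rule allI)
      fix t
      have "(\<lambda>k. (F (x k))$t) \<longlonglongrightarrow> (F z)$t"
        unfolding Fc case_prod_unfold by (intro tendsto_intros lim)
      moreover have "(\<lambda>k. (F (x k))$t) \<longlonglongrightarrow> z$t"
        unfolding xS[symmetric] using lim by (rule LIMSEQ_Suc)
      ultimately show "(F z)$t = z$t" by (rule LIMSEQ_unique)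
    qed
    then show ?thesis using z0 zy sol by blast
  qed
  have xst: "xs$t = c$t + (\<Sum>(r,s)\<in>UNIV\<times>UNIV. xs$r * xs$s * T r s t)" for t
    using Fc[of xs t] Fxs by simp
  have MT: "MinvB M b r s t = T r s t" for r s t unfolding MinvB_def T_def Ndef ..
  have cdef: "c = matrix_inv M *v a" unfolding c_def Ndef ..
  show ?thesis
  proof
    assume pos: "xs$i > 0"
    define S0 where "S0 = {h. c$h > 0}"
    define G where "G A = A \<union> {t. \<exists>r\<in>A. \<exists>s\<in>A. 0 < T r s t}" for A
    define L where "L = (\<Union>k. (G^^k) S0)"
    have Gsub: "A \<subseteq> G A" for A unfolding G_def by blast
    have chain: "(G^^k1) S0 \<subseteq> (G^^k2) S0" if "k1 \<le> k2" for k1 k2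
      by (rule lift_Suc_mono_le[of "\<lambda>k. (G^^k) S0", OF _ that]) (simp add: Gsub)
    have S0L: "S0 \<subseteq> L" unfolding L_def by (metis UNIV_I UN_upper funpow_0)
    have Lclosed: "t \<in> L" if h1: "r \<in> L" and h2: "s \<in> L" and h3: "0 < T r s t" for r s t
    proof -
      obtain k1 k2 where "r \<in> (G^^k1) S0" "s \<in> (G^^k2) S0" using h1 h2 unfolding L_def by blast
      then have "r \<in> (G^^(max k1 k2)) S0" "s \<in> (G^^(max k1 k2)) S0"
        using chain[of k1 "max k1 k2"] chain[of k2 "max k1 k2"] by auto
      then have "t \<in> (G^^(Suc (max k1 k2))) S0" using h3 unfolding G_def by auto
      then show ?thesis unfolding L_def by blast
    qed
    define y where "y = (\<chi> j. if j \<in> L then xs$j else 0)"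
    have y0: "\<forall>j. 0 \<le> y$j" using xs0 by (simp add: y_def)
    have yxs: "\<forall>j. y$j \<le> xs$j" using xs0 by (simp add: y_def)
    have Fy: "\<forall>j. (F y)$j \<le> y$j"
    proof
      fix j
      show "(F y)$j \<le> y$j"
      proof (cases "j \<in> L")
        case True
        have "(F y)$j \<le> (F xs)$j" using y0 yxs by (rule Fmono)
        then show ?thesis using True Fxs by (simp add: y_def)
      next
        case False
        have cj: "c$j \<le> 0" using False S0L unfolding S0_def by (metis mem_Collect_eq not_le subsetD)
        have "(\<Sum>(r,s)\<in>UNIV\<times>UNIV. y$r * y$s * T r s j) = 0"
        proof (intro sum.neutral ballI)
          fix p assume "p \<in> (UNIV::'n set)\<times>(UNIV::'n set)"
          obtain r s where p: "p = (r,s)" by (cases p)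
          show "(case p of (r,s) \<Rightarrow> y$r * y$s * T r s j) = 0"
          proof (cases "r \<in> L \<and> s \<in> L")
            case True
            then have "\<not> 0 < T r s j" using Lclosed False by blast
            then have "T r s j = 0" using T0[of r s j] by simp
            then show ?thesis by (simp add: p)
          next
            case False
            then show ?thesis by (auto simp: p y_def)
          qed
        qed
        then have "(F y)$j = c$j" by (simp add: Fc)
        then show ?thesis using cj False by (simp add: y_def)
      qed
    qed
    obtain z where z: "is_solution M a b z" "\<forall>j. z$j \<le> y$j" using super[OF y0 Fy] by blast
    have "xs$i \<le> y$i" using xs_min[OF z(1)] z(2) by (meson order_trans)
    then have "i \<in> L" using pos by (simp add: y_def split: if_splits)
    then obtain k where k: "i \<in> (G^^k) S0" unfolding L_def by blast
    define S where "S = map (\<lambda>h. (G^^h) S0) [0..<Suc k]"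
    have "positivity_showing M a b i S"
      unfolding positivity_showing_def
    proof (intro conjI allI impI ballI)
      show "S \<noteq> []" by (simp add: S_def)
      show "S ! 0 = {h. 0 < (matrix_inv M *v a) $ h}"
        by (simp add: S_def nth_map S0_def cdef del: upt_Suc)
      fix h assume h: "Suc h < length S"
      then have hk: "Suc h < Suc k" by (simp add: S_def)
      have Sh: "S ! h = (G^^h) S0" "S ! Suc h = G ((G^^h) S0)" using hk
        by (simp_all add: S_def nth_map del: upt_Suc)
      show "S ! h \<subseteq> S ! Suc h" unfolding Sh by (rule Gsub)
      fix t assume "t \<in> S ! Suc h - S ! h"
      then show "\<exists>r\<in>S ! h. \<exists>s\<in>S ! h. 0 < MinvB M b r s t"
        unfolding Sh MT G_def by blast
    next
      show "i \<in> last S" using k by (simp add: S_def last_map del: upt_Suc)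
    qed
    then show "\<exists>S. positivity_showing M a b i S" by blast
  next
    assume "\<exists>S. positivity_showing M a b i S"
    then obtain S where S: "positivity_showing M a b i S" by blast
    note Sd = S[unfolded positivity_showing_def]
    have key: "\<forall>t \<in> S!h. 0 < xs$t" if "h < length S" for h
      using that
    proof (induction h)
      case 0
      show ?case
      proof
        fix t assume "t \<in> S!0"
        then have "0 < c$t" using Sd cdef by simp
        moreover have "0 \<le> (\<Sum>(r,s)\<in>UNIV\<times>UNIV. xs$r * xs$s * T r s t)"
          using termnn[OF xs0] by (intro sum_nonneg) (auto simp: case_prod_unfold)
        ultimately show "0 < xs$t" using xst[of t] by linarith
      qed
    next
      case (Suc h)
      then have IH: "\<forall>t \<in> S!h. 0 < xs$t" by simp
      show ?case
      proof
        fix t assume t: "t \<in> S! Suc h"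
        show "0 < xs$t"
        proof (cases "t \<in> S!h")
          case True then show ?thesis using IH by blast
        next
          case False
          have "\<exists>r\<in>S!h. \<exists>s\<in>S!h. 0 < MinvB M b r s t"
            using Sd Suc.prems t False by blast
          then obtain r s where rs: "r \<in> S!h" "s \<in> S!h" "0 < T r s t"
            unfolding MT by blast
          have "0 < xs$r * xs$s * T r s t" using IH rs by simp
          also have "\<dots> \<le> (\<Sum>(r,s)\<in>UNIV\<times>UNIV. xs$r * xs$s * T r s t)"
            using member_le_sum[of "(r,s)" "UNIV \<times> UNIV" "\<lambda>(r,s). xs$r * xs$s * T r s t"]
              termnn[OF xs0] by (auto simp: case_prod_unfold)
          finally show ?thesis using xst[of t] c0[of t] by linarith
        qed
      qed
    qed
    have "i \<in> S ! (length S - 1)" using Sd last_conv_nth[of S] by metis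
    moreover have "length S - 1 < length S" using Sd by simp
    ultimately show "xs$i > 0" using key by blast
  qed
qed

theorem mainTheorem14:
  fixes M :: "real^'n^'n" and a :: "real^'n" and b :: "real^'n \<Rightarrow> real^'n \<Rightarrow> real^'n"
    and xs :: "real^'n"
  assumes "nonsingular_M_matrix M"
    and "\<forall>i. 0 \<le> a$i"
    and "bilinear b"
    and "\<forall>x y. (\<forall>i. 0 \<le> x$i) \<longrightarrow> (\<forall>i. 0 \<le> y$i) \<longrightarrow> (\<forall>i. 0 \<le> b x y $ i)"
    and "\<exists>y. is_solution M a b y"
    and "is_minimal_solution M a b xs"
  shows "\<forall>i. xs$i > 0 \<longleftrightarrow> (\<exists>S. positivity_showing M a b i S)"
proof -
  obtain s P where P: "\<forall>i j. 0 \<le> P$i$j" "spec_rad P \<le> s" "M = s *\<^sub>R mat 1 - P"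
    and inv: "invertible M"
    using assms(1) unfolding nonsingular_M_matrix_def is_M_matrix_def by blast
  have Q: "Qp P s" using Qp_s[OF P(1,2)] inv P(3) invertible_det_nz by blast
  define N where "N = matrix_inv M"
  have NN: "M ** N = mat 1 \<and> N ** M = mat 1"
    using inv unfolding invertible_def N_def matrix_inv_def by (rule someI_ex)
  have MN: "M *v (N *v v) = v" for v using NN by (simp add: matrix_vector_mul_assoc)
  have NM: "N *v (M *v v) = v" for v using NN by (simp add: matrix_vector_mul_assoc)
  have Nn: "\<forall>i. 0 \<le> (N *v v)$i" if "\<forall>i. 0 \<le> v$i" for v
    using Q that MN[of v] P(3) unfolding Qp_def by metis
  show ?thesis
    using core[OF MN NM Nn N_def assms(2,3,4,6)] by blast
qed

end
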